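(* It is not possible in general to construct by origami a right triangle with given hypotenuse and leg. Precisely: $\sqrt{2+\sqrt2}\in\mathbb F_0$ and $1\in\mathbb F_0$, but $\sqrt{(\sqrt{2+\sqrt2})^2-1^2}=\sqrt{1+\sqrt2}\notin\mathbb F_0$. In particular $\mathbb F_0$ is not closed under $(h,a)\mapsto\sqrt{h^2-a^2}$ for $h>a>0$.
   Context: An origami pair is a pair $(\mathcal P,\mathcal L)$ where $\mathcal P\subset\mathbb R^2$ is a set of points and $\mathcal L$ is a collection of lines in $\mathbb R^2$ such that: (i) the intersection point of any two non-parallel lines of $\mathcal L$ lies in $\mathcal P$; (ii) for any two distinct points of $\mathcal P$, the line through them is in $\mathcal L$; (iii) for any two distinct points of $\mathcal P$, the perpendicular bisector of the segment joining them is in $\mathcal L$; (iv) if $L_1,L_2\in\mathcal L$, then every line equidistant from $L_1$ and $L_2$ is in $\mathcal L$ (the midline if they are parallel, the angle bisectors if they intersect); (v) if $L_1,L_2\in\mathcal L$, then the mirror reflection of $L_2$ across $L_1$ is in $\mathcal L$. A set $\mathcal P\subset\mathbb R^2$ is closed under origami constructions if there is a collection of lines $\mathcal L$ with $(\mathcal P,\mathcal L)$ an origami pair. The set of origami constructible points is $\mathcal P_0=\bigcap\{\mathcal P : (0,0),(0,1)\in\mathcal P \text{ and } \mathcal P \text{ is closed under origami constructions}\}$. The set of origami numbers is $\mathbb F_0=\{\alpha\in\mathbb R : \exists v_1,v_2\in\mathcal P_0,\ |\alpha|=\operatorname{dist}(v_1,v_2)\}$. *)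

theory Defs
  imports "HOL-Analysis.Analysis"
begin

type_synonym point = "real \<times> real"

definition line_eq :: "real \<Rightarrow> real \<Rightarrow> real \<Rightarrow> point set" where
  "line_eq a b c = {p. a * fst p + b * snd p = c}"

definition is_line :: "point set \<Rightarrow> bool" where
  "is_line L \<longleftrightarrow> (\<exists>a b c. (a, b) \<noteq> (0, 0) \<and> L = line_eq a b c)"

definition line_through :: "point \<Rightarrow> point \<Rightarrow> point set" where
  "line_through p q = {x. \<exists>t::real. x = (fst p + t * (fst q - fst p), snd p + t * (snd q - snd p))}"

definition perp_bisector :: "point \<Rightarrow> point \<Rightarrow> point set" where
  "perp_bisector p q = {x. dist x p = dist x q}"

definition reflect_pt :: "point set \<Rightarrow> point \<Rightarrow> point" where
  "reflect_pt L p = (let (a, b, c) = (SOME (a, b, c). (a, b) \<noteq> (0, 0) \<and> L = line_eq a b c);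
                         k = 2 * (a * fst p + b * snd p - c) / (a\<^sup>2 + b\<^sup>2)
                     in (fst p - k * a, snd p - k * b))"

definition reflect_line :: "point set \<Rightarrow> point set \<Rightarrow> point set" where
  "reflect_line L1 L2 = reflect_pt L1 ` L2"

text \<open>L is a line equidistant from the two distinct lines L1 and L2 (the midline if they are
  parallel, one of the two angle bisectors if they intersect).\<close>
definition equidistant_line :: "point set \<Rightarrow> point set \<Rightarrow> point set \<Rightarrow> bool" where
  "equidistant_line L L1 L2 \<longleftrightarrow> is_line L \<and> (\<forall>x\<in>L. infdist x L1 = infdist x L2)"

definition origami_pair :: "point set \<Rightarrow> point set set \<Rightarrow> bool" where
  "origami_pair P \<L> \<longleftrightarrow>
     (\<forall>L\<in>\<L>. is_line L) \<and>
     (\<forall>L1\<in>\<L>. \<forall>L2\<in>\<L>. \<forall>p. L1 \<inter> L2 = {p} \<longrightarrow> p \<in> P) \<and>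
     (\<forall>p\<in>P. \<forall>q\<in>P. p \<noteq> q \<longrightarrow> line_through p q \<in> \<L>) \<and>
     (\<forall>p\<in>P. \<forall>q\<in>P. p \<noteq> q \<longrightarrow> perp_bisector p q \<in> \<L>) \<and>
     (\<forall>L1\<in>\<L>. \<forall>L2\<in>\<L>. \<forall>L. L1 \<noteq> L2 \<longrightarrow> equidistant_line L L1 L2 \<longrightarrow> L \<in> \<L>) \<and>
     (\<forall>L1\<in>\<L>. \<forall>L2\<in>\<L>. reflect_line L1 L2 \<in> \<L>)"

definition origami_closed :: "point set \<Rightarrow> bool" where
  "origami_closed P \<longleftrightarrow> (\<exists>\<L>. origami_pair P \<L>)"

definition P0 :: "point set" where
  "P0 = \<Inter>{P. (0, 0) \<in> P \<and> (0, 1) \<in> P \<and> origami_closed P}"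

definition F0 :: "real set" where
  "F0 = {\<alpha>. \<exists>v1\<in>P0. \<exists>v2\<in>P0. \<bar>\<alpha>\<bar> = dist v1 v2}"

end

theory Submission
  imports Defs
begin


lemma sqrt2_not_rat: "sqrt 2 \<notin> \<rat>"
proof
  assume "sqrt 2 \<in> \<rat>"
  then obtain m n :: nat
    where n: "n \<noteq> 0" and sq: "\<bar>sqrt 2\<bar> = m / n" and cop: "coprime m n"
    by (rule Rats_abs_nat_div_natE)
  have "real m = sqrt 2  *  n" using n sq by (simp add: field_simps)
  then have "real (m^2) = real (2  *  n^2)" by (simp add: power_mult_distrib)
  then have eq: "m^2 = 2  *  n^2" by (metis of_nat_eq_iff)
  have p: "prime (2::nat)" by simp
  have "2 dvd m" using eq p prime_dvd_power by (metis dvd_triv_left)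
  then obtain k where "m = 2  *  k" ..
  with eq have "n^2 = 2  *  k^2" by (simp add: power2_eq_square)
  then have "2 dvd n" using p prime_dvd_power by (metis dvd_triv_left)
  with \<open>2 dvd m\<close> cop show False
    by (metis coprime_common_divisor_nat one_neq_zero numeral_eq_one_iff semiring_norm(85))
qed

definition fhom :: "(real \<times> real) set \<Rightarrow> bool" where
  "fhom G \<longleftrightarrow> (\<forall>x u v. (x,u)\<in>G \<longrightarrow> (x,v)\<in>G \<longrightarrow> u=v) \<and> (0,0)\<in>G \<and> (1,1)\<in>G \<and>
    (\<forall>x u y v. (x,u)\<in>G \<longrightarrow> (y,v)\<in>G \<longrightarrow> (x+y,u+v)\<in>G \<and> (x * y,u  *  v)\<in>G) \<and>
    (\<forall>x u. (x,u)\<in>G \<longrightarrow> (-x,-u)\<in>G \<and> (inverse x, inverse u)\<in>G)"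

definition good :: "(real \<times> real) set \<Rightarrow> bool" where
  "good G \<longleftrightarrow> fhom G \<and> (sqrt 2, - sqrt 2) \<in> G"

lemma fhom_rat: "fhom {(x,x) | x. x \<in> \<rat>}"
  unfolding fhom_def by (auto intro: Rats_add Rats_mult Rats_minus_iff Rats_inverse)

lemma fhomD:
  assumes "fhom G"
  shows "(x,u)\<in>G \<Longrightarrow> (x,v)\<in>G \<Longrightarrow> u=v" "(0,0)\<in>G" "(1,1)\<in>G"
    "(x,u)\<in>G \<Longrightarrow> (y,v)\<in>G \<Longrightarrow> (x+y,u+v)\<in>G"
    "(x,u)\<in>G \<Longrightarrow> (y,v)\<in>G \<Longrightarrow> (x * y,u  *  v)\<in>G"
    "(x,u)\<in>G \<Longrightarrow> (-x,-u)\<in>G" "(x,u)\<in>G \<Longrightarrow> (inverse x,inverse u)\<in>G"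
  using assms unfolding fhom_def by blast+

lemma fhom_diff: "fhom G \<Longrightarrow> (x,u)\<in>G \<Longrightarrow> (y,v)\<in>G \<Longrightarrow> (x-y,u-v)\<in>G"
  using fhomD(4)[of G x u "-y" "-v"] fhomD(6)[of G y v] by simp

lemma fhom_div: "fhom G \<Longrightarrow> (x,u)\<in>G \<Longrightarrow> (y,v)\<in>G \<Longrightarrow> (x/y,u/v)\<in>G"
  using fhomD(5)[of G x u "inverse y" "inverse v"] fhomD(7)[of G y v] by (simp add: divide_inverse)

lemma fhom_inj: assumes "fhom G" "(x,u)\<in>G" "x \<noteq> 0" shows "u \<noteq> 0"
proof
  assume "u = 0"
  have "(x  *  inverse x, u  *  inverse u) \<in> G" using assms fhomD(5,7) by blast
  then have "(1, 0) \<in> G" using \<open>u=0\<close> assms(3) by simp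
  then show False using fhomD(1)[OF assms(1) _ fhomD(3)[OF assms(1)], of 0] by simp
qed

lemma fhom_ext:
  assumes G: "fhom G" and d: "d \<notin> fst ` G" and dd: "(d * d, w) \<in> G" and e: "e * e = w"
  defines "G' \<equiv> {(x + y * d, u + v * e) | x u y v. (x,u)\<in>G \<and> (y,v)\<in>G}"
  shows "fhom G' \<and> G \<subseteq> G' \<and> (d,e) \<in> G'"
proof -
  note D = fhomD[OF G]
  have memI: "(x + y * d, u + v * e) \<in> G'" if "(x,u)\<in>G" "(y,v)\<in>G" for x u y v
    using that unfolding G'_def by blast
  have sub: "G \<subseteq> G'"
  proof
    fix p assume "p \<in> G" then obtain x u where p: "p = (x,u)" "(x,u)\<in>G" by (cases p) auto
    show "p \<in> G'" using memI[OF p(2) D(2)] p by simp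
  qed
  have de: "(d,e) \<in> G'" using memI[OF D(2) D(3)] by simp
  have uniq: "y = y'" if "(x,u)\<in>G" "(y,v)\<in>G" "(x',u')\<in>G" "(y',v')\<in>G"
    "x + y * d = x' + y' * d" for x u y v x' u' y' v'
  proof (rule ccontr)
    assume "y \<noteq> y'"
    then have "d = (x - x') / (y' - y)" using that(5) by (simp add: field_simps)
    moreover have "((x - x') / (y' - y), (u-u')/(v'-v)) \<in> G"
      using fhom_div[OF G fhom_diff[OF G that(1,3)] fhom_diff[OF G that(4,2)]] .
    ultimately show False using d by force
  qed
  have sv: "\<forall>x u v. (x,u)\<in>G' \<longrightarrow> (x,v)\<in>G' \<longrightarrow> u=v"
  proof (intro allI impI)
    fix z u v assume "(z,u)\<in>G'" "(z,v)\<in>G'"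
    then obtain x1 u1 y1 v1 x2 u2 y2 v2 where h: "(x1,u1)\<in>G" "(y1,v1)\<in>G" "(x2,u2)\<in>G" "(y2,v2)\<in>G"
      "z = x1 + y1 * d" "u = u1 + v1 * e" "z = x2 + y2 * d" "v = u2 + v2 * e" unfolding G'_def by blast
    have "y1 = y2" using uniq[OF h(1,2,3,4)] h(5,7) by simp
    then have "x1 = x2" using h(5,7) by simp
    show "u = v" using D(1)[OF h(2)] D(1)[OF h(1)] h \<open>y1=y2\<close> \<open>x1=x2\<close> by simp
  qed
  have add: "(a+b, p+q) \<in> G'" if A: "(a,p)\<in>G'" "(b,q)\<in>G'" for a b p q
  proof -
    obtain x1 u1 y1 v1 where h1: "(x1,u1)\<in>G" "(y1,v1)\<in>G"
      "a = x1 + y1 * d" "p = u1 + v1 * e" using A(1) unfolding G'_def by blast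
    obtain x2 u2 y2 v2 where h2: "(x2,u2)\<in>G" "(y2,v2)\<in>G"
      "b = x2 + y2 * d" "q = u2 + v2 * e" using A(2) unfolding G'_def by blast
    note h = h1(1,2) h2(1,2) h1(3,4) h2(3,4)
    have "(x1+x2 + (y1+y2) * d, u1+u2 + (v1+v2) * e) \<in> G'" using memI D(4) h by blast
    then show ?thesis using h by (simp add: algebra_simps)
  qed
  have mul: "(a * b, p * q) \<in> G'" if A: "(a,p)\<in>G'" "(b,q)\<in>G'" for a b p q
  proof -
    obtain x1 u1 y1 v1 where h1: "(x1,u1)\<in>G" "(y1,v1)\<in>G"
      "a = x1 + y1 * d" "p = u1 + v1 * e" using A(1) unfolding G'_def by blast
    obtain x2 u2 y2 v2 where h2: "(x2,u2)\<in>G" "(y2,v2)\<in>G"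
      "b = x2 + y2 * d" "q = u2 + v2 * e" using A(2) unfolding G'_def by blast
    note h = h1(1,2) h2(1,2) h1(3,4) h2(3,4)
    have "(x1 * x2 + y1 * y2 * (d * d) + (x1 * y2+y1 * x2) * d, u1 * u2 + v1 * v2 * w + (u1 * v2+v1 * u2) * e) \<in> G'"
      using memI[OF D(4)[OF D(5)[OF h(1) h(3)] D(5)[OF D(5)[OF h(2) h(4)] dd]] D(4)[OF D(5)[OF h(1) h(4)] D(5)[OF h(2) h(3)]]] .
    then show ?thesis using h e[symmetric] by (simp add: algebra_simps)
  qed
  have neg: "(-a, -p) \<in> G'" if A: "(a,p)\<in>G'" for a p
  proof -
    obtain x1 u1 y1 v1 where h: "(x1,u1)\<in>G" "(y1,v1)\<in>G"
      "a = x1 + y1 * d" "p = u1 + v1 * e" using A unfolding G'_def by blast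
    have "(-x1 + (-y1) * d, -u1 + (-v1) * e) \<in> G'" using memI D(6) h by blast
    then show ?thesis using h by (simp add: algebra_simps)
  qed
  have inv: "(inverse a, inverse p) \<in> G'" if A: "(a,p)\<in>G'" for a p
  proof -
    obtain x1 u1 y1 v1 where h: "(x1,u1)\<in>G" "(y1,v1)\<in>G"
      "a = x1 + y1 * d" "p = u1 + v1 * e" using A unfolding G'_def by blast
    show ?thesis
    proof (cases "x1 * x1 - y1 * y1 * (d * d) = 0")
      case True
      have "y1 = 0"
      proof (rule ccontr)
        assume "y1 \<noteq> 0"
        then have "(x1/y1)^2 = d^2" using True by (simp add: field_simps power2_eq_square)
        then have "d = x1/y1 \<or> d = -(x1/y1)" by (metis power2_eq_iff)
        moreover have "(x1/y1, u1/v1) \<in> G" "(-(x1/y1), -(u1/v1)) \<in> G"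
          using fhom_div[OF G h(1,2)] D(6) by blast+
        ultimately show False using d by force
      qed
      then have "x1 = 0" using True by simp
      have "u1 = 0" "v1 = 0" using D(1)[OF h(1)] D(1)[OF h(2)] D(2) \<open>y1=0\<close> \<open>x1=0\<close> by auto
      then show ?thesis using h \<open>y1=0\<close> \<open>x1=0\<close> memI[OF D(2) D(2)] by simp
    next
      case False
      define N where "N = x1 * x1 - y1 * y1 * (d * d)"
      define M where "M = u1 * u1 - v1 * v1 * w"
      have NM: "(N, M) \<in> G" unfolding N_def M_def
        using fhom_diff[OF G D(5)[OF h(1) h(1)] D(5)[OF D(5)[OF h(2) h(2)] dd]] .
      have N0: "N \<noteq> 0" using False N_def by simp
      have M0: "M \<noteq> 0" using fhom_inj[OF G NM N0] .
      have m: "(x1/N + (-y1/N) * d, u1/M + (-v1/M) * e) \<in> G'"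
        using memI[OF fhom_div[OF G h(1) NM] D(6)[OF fhom_div[OF G h(2) NM]]] by simp
      have NF: "N = (x1 + y1 * d) * (x1 - y1 * d)" unfolding N_def by (simp add: algebra_simps)
      have MF: "M = (u1 + v1 * e) * (u1 - v1 * e)" unfolding M_def using e[symmetric] by (simp add: algebra_simps)
      have NF2: "N = a * (x1 - y1 * d)" using NF h(3) by simp
      have MF2: "M = p * (u1 - v1 * e)" using MF h(4) by simp
      have q1: "x1/N + (-y1/N) * d = (x1 - y1 * d) / N" by (simp add: diff_divide_distrib)
      have q2: "u1/M + (-v1/M) * e = (u1 - v1 * e) / M" by (simp add: diff_divide_distrib)
      have "a * (x1/N + (-y1/N) * d) = 1" unfolding q1 using N0 NF2 by simp
      then have "inverse a = x1/N + (-y1/N) * d" by (rule inverse_unique)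
      moreover
      have "p * (u1/M + (-v1/M) * e) = 1" unfolding q2 using M0 MF2 by simp
      then have "inverse p = u1/M + (-v1/M) * e" by (rule inverse_unique)
      ultimately show ?thesis using m by simp
    qed
  qed
  have "fhom G'" unfolding fhom_def
  proof (intro conjI)
    show "(0,0) \<in> G'" "(1,1) \<in> G'" using sub D(2,3) by auto
  qed (use sv add mul neg inv in auto)
  then show ?thesis using sub de by blast
qed

lemma good_base: "\<exists>G. good G"
proof -
  have "fhom {(x,x) | x. x \<in> \<rat>}" by (rule fhom_rat)
  moreover have "sqrt 2 \<notin> fst ` {(x,x) | x. x \<in> \<rat>}" using sqrt2_not_rat by auto
  moreover have "(sqrt 2 * sqrt 2, 2) \<in> {(x,x) | x::real. x \<in> \<rat>}" by simp
  moreover have "(- sqrt 2) * (- sqrt 2) = (2::real)" by simp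
  ultimately have "fhom {(x + y * sqrt 2, u + v * - sqrt 2) | x u y v. (x,u) \<in> {(x,x) | x. x \<in> \<rat>} \<and> (y,v) \<in> {(x,x) | x. x \<in> \<rat>}}
     \<and> (sqrt 2, - sqrt 2) \<in> {(x + y * sqrt 2, u + v * - sqrt 2) | x u y v. (x,u) \<in> {(x,x) | x. x \<in> \<rat>} \<and> (y,v) \<in> {(x,x) | x. x \<in> \<rat>}}"
    using fhom_ext[of "{(x,x) | x. x \<in> \<rat>}" "sqrt 2" 2 "- sqrt 2"] by blast
  then show ?thesis unfolding good_def by blast
qed

lemma chain_two:
  assumes "C \<in> chains A" "p \<in> \<Union>C" "q \<in> \<Union>C"
  shows "\<exists>X\<in>C. p \<in> X \<and> q \<in> X"
proof -
  obtain X Y where "X \<in> C" "Y \<in> C" "p \<in> X" "q \<in> Y" using assms by auto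
  then show ?thesis using chainsD[OF assms(1), of X Y] by blast
qed

lemma chain_good:
  assumes C: "C \<in> chains {G. good G}" and ne: "C \<noteq> {}"
  shows "good (\<Union>C)"
proof -
  have gX: "good X" if "X \<in> C" for X using chainsD2[OF C] that by auto
  have fX: "fhom X" if "X \<in> C" for X using gX[OF that] unfolding good_def by simp
  obtain X0 where X0: "X0 \<in> C" using ne by auto
  have "fhom (\<Union>C)" unfolding fhom_def
  proof (intro conjI allI impI)
    fix x u v assume "(x,u) \<in> \<Union>C" "(x,v) \<in> \<Union>C"
    then obtain X where "X \<in> C" "(x,u) \<in> X" "(x,v) \<in> X" using chain_two[OF C] by blast
    then show "u = v" using fhomD(1)[OF fX] by blast
  next
    show "(0,0) \<in> \<Union>C" using fhomD(2)[OF fX[OF X0]] X0 by blast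
  next
    show "(1,1) \<in> \<Union>C" using fhomD(3)[OF fX[OF X0]] X0 by blast
  next
    fix x u y v assume "(x,u) \<in> \<Union>C" "(y,v) \<in> \<Union>C"
    then obtain X where "X \<in> C" "(x,u) \<in> X" "(y,v) \<in> X" using chain_two[OF C] by blast
    then show "(x+y,u+v) \<in> \<Union>C" using fhomD(4)[OF fX] by blast
  next
    fix x u y v assume "(x,u) \<in> \<Union>C" "(y,v) \<in> \<Union>C"
    then obtain X where "X \<in> C" "(x,u) \<in> X" "(y,v) \<in> X" using chain_two[OF C] by blast
    then show "(x * y,u * v) \<in> \<Union>C" using fhomD(5)[OF fX] by blast
  next
    fix x u assume "(x,u) \<in> \<Union>C"
    then obtain X where "X \<in> C" "(x,u) \<in> X" by blast
    then show "(-x,-u) \<in> \<Union>C" using fhomD(6)[OF fX] by blast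
  next
    fix x u assume "(x,u) \<in> \<Union>C"
    then obtain X where "X \<in> C" "(x,u) \<in> X" by blast
    then show "(inverse x,inverse u) \<in> \<Union>C" using fhomD(7)[OF fX] by blast
  qed
  moreover have "(sqrt 2, - sqrt 2) \<in> \<Union>C" using gX[OF X0] X0 unfolding good_def by blast
  ultimately show ?thesis unfolding good_def by simp
qed

lemma exists_max: "\<exists>M. good M \<and> (\<forall>X. good X \<longrightarrow> M \<subseteq> X \<longrightarrow> X = M)"
proof -
  obtain G0 where G0: "good G0" using good_base by blast
  have "\<forall>C\<in>chains {G. good G}. \<exists>U\<in>{G. good G}. \<forall>X\<in>C. X \<subseteq> U"
  proof
    fix C assume C: "C \<in> chains {G. good G}"
    show "\<exists>U\<in>{G. good G}. \<forall>X\<in>C. X \<subseteq> U"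
    proof (cases "C = {}")
      case True then show ?thesis using G0 by auto
    next
      case False then show ?thesis using chain_good[OF C] by auto
    qed
  qed
  from Zorn_Lemma2[OF this] show ?thesis by auto
qed

lemma exists_K: "\<exists>K::real set. (\<forall>a\<in>K. \<forall>b\<in>K. a + b \<in> K \<and> a * b \<in> K \<and> -a \<in> K \<and> inverse a \<in> K
   \<and> sqrt (a^2 + b^2) \<in> K) \<and> 0 \<in> K \<and> 1 \<in> K \<and> sqrt (1 + sqrt 2) \<notin> K"
proof -
  obtain M where M: "good M" and mx: "\<And>X. good X \<Longrightarrow> M \<subseteq> X \<Longrightarrow> X = M" using exists_max by blast
  have F: "fhom M" and s2: "(sqrt 2, - sqrt 2) \<in> M" using M unfolding good_def by auto
  note D = fhomD[OF F]
  define K where "K = fst ` M"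
  have memK: "x \<in> K \<longleftrightarrow> (\<exists>u. (x,u) \<in> M)" for x unfolding K_def by force
  have pyth: "sqrt (a^2 + b^2) \<in> K" if aK: "a \<in> K" "b \<in> K" for a b
  proof (rule ccontr)
    assume nd: "sqrt (a^2 + b^2) \<notin> K"
    obtain ua ub where ab: "(a,ua) \<in> M" "(b,ub) \<in> M" using aK memK by auto
    have cw: "(a * a + b * b, ua * ua + ub * ub) \<in> M" using D(4)[OF D(5)[OF ab(1) ab(1)] D(5)[OF ab(2) ab(2)]] .
    have dd: "sqrt (a^2 + b^2) * sqrt (a^2 + b^2) = a * a + b * b"
      by (simp add: power2_eq_square)
    have ee: "sqrt (ua^2 + ub^2) * sqrt (ua^2 + ub^2) = ua * ua + ub * ub"
      by (simp add: power2_eq_square)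
    have nd': "sqrt (a^2 + b^2) \<notin> fst ` M" using nd unfolding K_def .
    have cw': "(sqrt (a^2 + b^2) * sqrt (a^2 + b^2), ua * ua + ub * ub) \<in> M" using cw dd by simp
    obtain G' where "fhom G'" "M \<subseteq> G'" "(sqrt (a^2 + b^2), sqrt (ua^2 + ub^2)) \<in> G'"
      using fhom_ext[OF F nd' cw' ee] by blast
    then have "good G'" "G' = M" using s2 mx unfolding good_def by auto
    then show False using nd memK \<open>(sqrt (a^2 + b^2), _) \<in> G'\<close> by auto
  qed
  have notin: "sqrt (1 + sqrt 2) \<notin> K"
  proof
    assume "sqrt (1 + sqrt 2) \<in> K"
    then obtain v where v: "(sqrt (1 + sqrt 2), v) \<in> M" using memK by auto
    have "(sqrt (1 + sqrt 2) * sqrt (1 + sqrt 2), v * v) \<in> M" using D(5)[OF v v] .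
    moreover have "sqrt (1 + sqrt 2) * sqrt (1 + sqrt 2) = 1 + sqrt 2"
      by (simp add: add_nonneg_nonneg)
    moreover have "(1 + sqrt 2, 1 + - sqrt 2) \<in> M" using D(4)[OF D(3) s2] .
    ultimately have "v * v = 1 - sqrt 2" using D(1) by fastforce
    moreover have "sqrt 2 > (1::real)" by simp
    ultimately show False using zero_le_square[of v] by linarith
  qed
  show ?thesis
  proof (intro exI[of _ K] conjI ballI)
    fix a b assume "a \<in> K" "b \<in> K"
    then obtain u v where uv: "(a,u) \<in> M" "(b,v) \<in> M" using memK by auto
    show "a + b \<in> K" using D(4)[OF uv] memK by blast
    show "a * b \<in> K" using D(5)[OF uv] memK by blast
    show "-a \<in> K" using D(6)[OF uv(1)] memK by blast
    show "inverse a \<in> K" using D(7)[OF uv(1)] memK by blast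
    show "sqrt (a^2 + b^2) \<in> K" using pyth \<open>a \<in> K\<close> \<open>b \<in> K\<close> .
  next
    show "0 \<in> K" "1 \<in> K" using D(2,3) memK by blast+
    show "sqrt (1 + sqrt 2) \<notin> K" using notin .
  qed
qed



lemma line_eq_mem: "p \<in> line_eq a b c \<longleftrightarrow> a * fst p + b * snd p = c"
  unfolding line_eq_def by simp

lemma line_eq_scale: assumes "l \<noteq> 0" shows "line_eq (l * a) (l * b) (l * c) = line_eq a b c"
proof -
  have "(l * a) * x + (l * b) * y = l * c \<longleftrightarrow> a * x + b * y = c" for x y :: real
  proof -
    have "(l * a) * x + (l * b) * y = l * (a * x + b * y)" by (simp add: algebra_simps)
    then show ?thesis using assms by simp
  qed
  then show ?thesis unfolding line_eq_def by auto
qed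

lemma ab_pos: "(a, b) \<noteq> (0::real, 0) \<Longrightarrow> a^2 + b^2 > 0"
  by (simp add: sum_power2_gt_zero_iff)

lemma line_eq_pt: assumes "(a, b) \<noteq> (0::real, 0)"
  shows "(c * a / (a^2 + b^2), c * b / (a^2 + b^2)) \<in> line_eq a b c"
proof -
  define n where "n = a^2 + b^2"
  have n0: "n \<noteq> 0" using ab_pos[OF assms] n_def by linarith
  have "a * (c * a / n) + b * (c * b / n) = (a * (c * a) + b * (c * b)) / n" by (simp add: add_divide_distrib)
  also have "a * (c * a) + b * (c * b) = c * n" unfolding n_def by (simp add: power2_eq_square algebra_simps)
  finally have "a * (c * a / n) + b * (c * b / n) = c" using n0 by simp
  then show ?thesis unfolding line_eq_mem n_def by simp
qed

lemma line_eq_sub_prop: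
  assumes ab: "(a, b) \<noteq> (0::real, 0)" and ab': "(a', b') \<noteq> (0, 0)"
    and sub: "line_eq a b c \<subseteq> line_eq a' b' c'"
  shows "\<exists>l. l \<noteq> 0 \<and> a' = l * a \<and> b' = l * b \<and> c' = l * c"
proof -
  define n where "n = a^2 + b^2"
  have n0: "n > 0" using ab_pos[OF ab] n_def by simp
  define p where "p = (c * a / n, c * b / n)"
  have p: "p \<in> line_eq a b c" using line_eq_pt[OF ab] unfolding p_def n_def .
  have "a * (fst p - b) + b * (snd p + a) = a * fst p + b * snd p" by (simp add: algebra_simps)
  then have q: "(fst p - b, snd p + a) \<in> line_eq a b c" using p unfolding line_eq_mem by simp
  have e1: "a' * fst p + b' * snd p = c'" using subsetD[OF sub p] unfolding line_eq_mem by simp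
  have e2: "a' * (fst p - b) + b' * (snd p + a) = c'" using subsetD[OF sub q] unfolding line_eq_mem by simp
  have cr: "b' * a = a' * b" using e1 e2 by (simp add: algebra_simps)
  define l where "l = (a * a' + b * b') / n"
  have ln: "l * n = a * a' + b * b'" unfolding l_def using n0 by simp
  have ha: "a' = l * a"
  proof -
    have "l * a * n = (l * n) * a" by (simp add: algebra_simps)
    also have "\<dots> = a * a * a' + b * (b' * a)" unfolding ln by (simp add: algebra_simps)
    also have "\<dots> = a' * n" unfolding cr n_def by (simp add: algebra_simps power2_eq_square)
    finally show ?thesis using n0 by simp
  qed
  have hb: "b' = l * b"
  proof -
    have "l * b * n = (l * n) * b" by (simp add: algebra_simps)
    also have "\<dots> = a * (b' * a) + b * b * b'" unfolding ln cr by (simp add: algebra_simps)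
    also have "\<dots> = b' * n" unfolding n_def by (simp add: algebra_simps power2_eq_square)
    finally show ?thesis using n0 by simp
  qed
  have hc: "c' = l * c"
  proof -
    have "c' = l * (a * fst p + b * snd p)" using e1 ha hb by (simp add: algebra_simps)
    also have "a * fst p + b * snd p = c" using p unfolding line_eq_def by simp
    finally show ?thesis .
  qed
  have "l \<noteq> 0" using ab' ha hb by auto
  then show ?thesis using ha hb hc by blast
qed

lemma line_eq_sub_eq:
  assumes "(a, b) \<noteq> (0::real, 0)" "(a', b') \<noteq> (0, 0)" "line_eq a b c \<subseteq> line_eq a' b' c'"
  shows "line_eq a' b' c' = line_eq a b c"
proof -
  obtain l where "l \<noteq> 0" "a' = l * a" "b' = l * b" "c' = l * c" using line_eq_sub_prop[OF assms] by blast
  then show ?thesis using line_eq_scale by simp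
qed

lemma line_through_eq:
  assumes "p \<noteq> q"
  shows "line_through p q = line_eq (snd q - snd p) (fst p - fst q)
            ((snd q - snd p) * fst p + (fst p - fst q) * snd p)"
proof
  show "line_through p q \<subseteq> line_eq (snd q - snd p) (fst p - fst q) ((snd q - snd p) * fst p + (fst p - fst q) * snd p)"
    unfolding line_through_def line_eq_def by (auto simp: algebra_simps)
next
  show "line_eq (snd q - snd p) (fst p - fst q) ((snd q - snd p) * fst p + (fst p - fst q) * snd p) \<subseteq> line_through p q"
  proof
    fix x assume x: "x \<in> line_eq (snd q - snd p) (fst p - fst q) ((snd q - snd p) * fst p + (fst p - fst q) * snd p)"
    then have E: "(snd q - snd p) * (fst x - fst p) = (fst q - fst p) * (snd x - snd p)"
      unfolding line_eq_def by (simp add: algebra_simps)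
    show "x \<in> line_through p q"
    proof (cases "fst q = fst p")
      case False
      define t where "t = (fst x - fst p) / (fst q - fst p)"
      have "fst x = fst p + t * (fst q - fst p)" using False unfolding t_def by simp
      moreover have "snd x = snd p + t * (snd q - snd p)"
      proof -
        have "t * (snd q - snd p) = (snd q - snd p) * (fst x - fst p) / (fst q - fst p)" unfolding t_def by simp
        also have "\<dots> = snd x - snd p" using E False by simp
        finally show ?thesis by simp
      qed
      ultimately show ?thesis unfolding line_through_def by (intro CollectI exI[of _ t]) (simp add: prod_eq_iff)
    next
      case True
      then have ne: "snd q \<noteq> snd p" using assms by (simp add: prod_eq_iff)
      then have fx: "fst x = fst p" using E True by simp
      define t where "t = (snd x - snd p) / (snd q - snd p)"
      have "snd x = snd p + t * (snd q - snd p)" using ne unfolding t_def by simp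
      then show ?thesis unfolding line_through_def using fx True by (intro CollectI exI[of _ t]) (simp add: prod_eq_iff)
    qed
  qed
qed

lemma dist_pt: "dist (x::point) y = sqrt ((fst x - fst y)^2 + (snd x - snd y)^2)"
  by (cases x; cases y) (simp add: dist_Pair_Pair dist_real_def)

lemma perp_bisector_eq:
  "perp_bisector p q = line_eq (2 * (fst q - fst p)) (2 * (snd q - snd p))
      ((fst q)^2 + (snd q)^2 - (fst p)^2 - (snd p)^2)"
proof -
  have "dist x p = dist x q \<longleftrightarrow> (fst x - fst p)^2 + (snd x - snd p)^2 = (fst x - fst q)^2 + (snd x - snd q)^2" for x
    unfolding dist_pt by simp
  then show ?thesis unfolding perp_bisector_def line_eq_def by (auto simp: power2_eq_square algebra_simps)
qed

lemma cs_ineq: "\<bar>a * u + b * v\<bar> \<le> sqrt (a^2 + b^2) * sqrt (u^2 + v^2)"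
proof -
  have "(a * u + b * v)^2 \<le> (a^2 + b^2) * (u^2 + v^2)"
  proof -
    have "(a^2 + b^2) * (u^2 + v^2) - (a * u + b * v)^2 = (a * v - b * u)^2" by (simp add: power2_eq_square algebra_simps)
    moreover have "(a * v - b * u)^2 \<ge> 0" by simp
    ultimately show ?thesis by linarith
  qed
  then have "sqrt ((a * u + b * v)^2) \<le> sqrt ((a^2 + b^2) * (u^2 + v^2))" by (rule real_sqrt_le_mono)
  then show ?thesis by (simp add: real_sqrt_mult)
qed

lemma infdist_line:
  assumes ab: "(a, b) \<noteq> (0::real, 0)"
  shows "infdist x (line_eq a b c) = \<bar>a * fst x + b * snd x - c\<bar> / sqrt (a^2 + b^2)"
proof -
  define n where "n = a^2 + b^2"
  have n0: "n > 0" using ab_pos[OF ab] n_def by simp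
  define h where "h = \<bar>a * fst x + b * snd x - c\<bar> / sqrt n"
  define k where "k = (a * fst x + b * snd x - c) / n"
  define y where "y = (fst x - k * a, snd x - k * b)"
  have kn: "k * n = a * fst x + b * snd x - c" unfolding k_def using n0 by simp
  have "a * (fst x - k * a) + b * (snd x - k * b) = a * fst x + b * snd x - k * n"
    unfolding n_def by (simp add: algebra_simps power2_eq_square)
  then have y: "y \<in> line_eq a b c" unfolding y_def line_eq_mem kn by simp
  have "dist x y = sqrt (k^2 * n)" unfolding dist_pt y_def n_def by (simp add: power2_eq_square algebra_simps)
  also have "\<dots> = \<bar>k\<bar> * sqrt n" by (simp add: real_sqrt_mult)
  also have "\<dots> = h"
  proof -
    have sp: "sqrt n > 0" using n0 by simp
    have sn: "sqrt n * sqrt n = n" using n0 by simp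
    have "\<bar>k\<bar> * sqrt n = \<bar>a * fst x + b * snd x - c\<bar> * sqrt n / n" unfolding k_def using n0 by (simp add: abs_div)
    also have "\<dots> = \<bar>a * fst x + b * snd x - c\<bar> * sqrt n / (sqrt n * sqrt n)" by (simp only: sn)
    also have "\<dots> = h"
    proof -
      have gen: "E * s / (s * s) = E / s" if "s > 0" for E s :: real using that by simp
      show ?thesis unfolding h_def using gen[OF sp] .
    qed
    finally show ?thesis .
  qed
  finally have dy: "dist x y = h" .
  have ne: "line_eq a b c \<noteq> {}" using y by auto
  have "infdist x (line_eq a b c) \<le> h" using infdist_le[OF y, of x] dy by simp
  moreover have "h \<le> infdist x (line_eq a b c)"
    unfolding infdist_notempty[OF ne]
  proof (rule cINF_greatest[OF ne])
    fix z assume z: "z \<in> line_eq a b c"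
    have "a * fst x + b * snd x - c = a * (fst x - fst z) + b * (snd x - snd z)"
      using z unfolding line_eq_def by (simp add: algebra_simps)
    then have "\<bar>a * fst x + b * snd x - c\<bar> \<le> sqrt n * dist x z"
      unfolding dist_pt n_def using cs_ineq by simp
    then show "h \<le> dist x z" unfolding h_def using n0 by (simp add: divide_le_eq mult.commute)
  qed
  ultimately show ?thesis unfolding h_def n_def by simp
qed



lemma cramer:
  assumes "a * x + b * y = (c::real)" "a' * x + b' * y = c'"
  shows "(a * b' - a' * b) * x = c * b' - c' * b" "(a * b' - a' * b) * y = a * c' - a' * c"
proof -
  show "(a * b' - a' * b) * x = c * b' - c' * b"
    using arg_cong[OF assms(1), of "\<lambda>t. t * b'"] arg_cong[OF assms(2), of "\<lambda>t. t * b"]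
    by (simp add: algebra_simps)
  show "(a * b' - a' * b) * y = a * c' - a' * c"
    using arg_cong[OF assms(1), of "\<lambda>t. t * a'"] arg_cong[OF assms(2), of "\<lambda>t. t * a"]
    by (simp add: algebra_simps)
qed

lemma inter_single:
  assumes d: "a * b' - a' * b \<noteq> (0::real)" and p: "p \<in> line_eq a b c" "p \<in> line_eq a' b' c'"
  shows "line_eq a b c \<inter> line_eq a' b' c' = {p}"
proof
  show "{p} \<subseteq> line_eq a b c \<inter> line_eq a' b' c'" using p by auto
  show "line_eq a b c \<inter> line_eq a' b' c' \<subseteq> {p}"
  proof
    fix q assume "q \<in> line_eq a b c \<inter> line_eq a' b' c'"
    then have q: "a * fst q + b * snd q = c" "a' * fst q + b' * snd q = c'" by (auto simp: line_eq_mem)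
    have p': "a * fst p + b * snd p = c" "a' * fst p + b' * snd p = c'" using p by (auto simp: line_eq_mem)
    have "(a * b' - a' * b) * fst q = (a * b' - a' * b) * fst p" by (rule trans[OF cramer(1)[OF q] sym[OF cramer(1)[OF p']]])
    then have "fst q = fst p" using mult_left_cancel[OF d] by blast
    moreover have "(a * b' - a' * b) * snd q = (a * b' - a' * b) * snd p" by (rule trans[OF cramer(2)[OF q] sym[OF cramer(2)[OF p']]])
    then have "snd q = snd p" using mult_left_cancel[OF d] by blast
    ultimately show "q \<in> {p}" by (simp add: prod_eq_iff)
  qed
qed

lemma single_det:
  assumes ab: "(a, b) \<noteq> (0::real, 0)" and s: "line_eq a b c \<inter> line_eq a' b' c' = {p}"
  shows "a * b' - a' * b \<noteq> 0"
proof
  assume d0: "a * b' - a' * b = 0"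
  have "p \<in> line_eq a b c \<inter> line_eq a' b' c'" using s by simp
  then have p: "a * fst p + b * snd p = c" "a' * fst p + b' * snd p = c'" by (auto simp: line_eq_mem)
  have "a * (fst p - b) + b * (snd p + a) = a * fst p + b * snd p" by (simp add: algebra_simps)
  then have e1: "a * (fst p - b) + b * (snd p + a) = c" using p(1) by linarith
  have "a' * (fst p - b) + b' * (snd p + a) = a' * fst p + b' * snd p + (a * b' - a' * b)" by (simp add: algebra_simps)
  then have e2: "a' * (fst p - b) + b' * (snd p + a) = c'" using p(2) d0 by linarith
  have "(fst p - b, snd p + a) \<in> line_eq a b c \<inter> line_eq a' b' c'" by (simp add: line_eq_mem e1 e2)
  then have "(fst p - b, snd p + a) = p" using s by auto
  then have "a = 0" "b = 0" by (auto simp: prod_eq_iff)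
  with ab show False by simp
qed

definition refl_f :: "real \<Rightarrow> real \<Rightarrow> real \<Rightarrow> point \<Rightarrow> point" where
  "refl_f a b c p = (let k = 2 * (a * fst p + b * snd p - c) / (a^2 + b^2) in (fst p - k * a, snd p - k * b))"

lemma refl_f_scale: "l \<noteq> 0 \<Longrightarrow> refl_f (l * a) (l * b) (l * c) = refl_f a b c"
proof
  fix p assume l: "l \<noteq> 0"
  have e: "2 * (l * a * fst p + l * b * snd p - l * c) / ((l * a)^2 + (l * b)^2)
     = (2 * (a * fst p + b * snd p - c) / (a^2 + b^2)) / l"
  proof -
    have "2 * (l * a * fst p + l * b * snd p - l * c) = l * (2 * (a * fst p + b * snd p - c))" by (simp add: algebra_simps)
    moreover have "(l * a)^2 + (l * b)^2 = l * (l * (a^2 + b^2))" by (simp add: algebra_simps power2_eq_square)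
    ultimately show ?thesis using l by simp
  qed
  show "refl_f (l * a) (l * b) (l * c) p = refl_f a b c p"
    unfolding refl_f_def Let_def e using l by simp
qed

lemma reflect_pt_eq:
  assumes ab: "(a, b) \<noteq> (0::real, 0)"
  shows "reflect_pt (line_eq a b c) = refl_f a b c"
proof
  fix p
  define T where "T = (SOME (a', b', c'). (a', b') \<noteq> (0, 0) \<and> line_eq a b c = line_eq a' b' c')"
  have "\<exists>t. (\<lambda>(a', b', c'). (a', b') \<noteq> (0::real, 0) \<and> line_eq a b c = line_eq a' b' c') t"
    using ab by (intro exI[of _ "(a,b,c)"]) simp
  then have T: "(\<lambda>(a', b', c'). (a', b') \<noteq> (0::real, 0) \<and> line_eq a b c = line_eq a' b' c') T"
    unfolding T_def by (rule someI_ex)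
  obtain a' b' c' where T': "T = (a', b', c')" by (cases T) auto
  have ab': "(a', b') \<noteq> (0, 0)" and eq: "line_eq a b c = line_eq a' b' c'" using T T' by auto
  obtain l where l: "l \<noteq> 0" "a' = l * a" "b' = l * b" "c' = l * c"
    using line_eq_sub_prop[OF ab ab'] eq by blast
  have "reflect_pt (line_eq a b c) p = refl_f a' b' c' p"
    unfolding reflect_pt_def refl_f_def T_def[symmetric] T' by simp
  also have "\<dots> = refl_f a b c p" using l refl_f_scale by simp
  finally show "reflect_pt (line_eq a b c) p = refl_f a b c p" .
qed

lemma refl_f_invol:
  assumes ab: "(a, b) \<noteq> (0::real, 0)"
  shows "refl_f a b c (refl_f a b c p) = p"
proof -
  define n where "n = a^2 + b^2"
  have n0: "n \<noteq> 0" using ab_pos[OF ab] n_def by linarith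
  define k where "k = 2 * (a * fst p + b * snd p - c) / n"
  have r: "refl_f a b c p = (fst p - k * a, snd p - k * b)" unfolding refl_f_def k_def n_def Let_def by simp
  have h1: "a * (fst p - k * a) + b * (snd p - k * b) - c = (a * fst p + b * snd p - c) - k * n"
    unfolding n_def by (simp add: algebra_simps power2_eq_square)
  have h2: "k * n = 2 * (a * fst p + b * snd p - c)" unfolding k_def using n0 by simp
  have h3: "a * (fst p - k * a) + b * (snd p - k * b) - c = - (a * fst p + b * snd p - c)" using h1 h2 by simp
  have "2 * (a * (fst p - k * a) + b * (snd p - k * b) - c) / n = 2 * (- (a * fst p + b * snd p - c)) / n"
    by (simp only: h3)
  also have "\<dots> = - k" unfolding k_def by (simp only: mult_minus_right minus_divide_left)
  finally have "2 * (a * (fst p - k * a) + b * (snd p - k * b) - c) / n = - k" .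
  then show ?thesis unfolding r unfolding refl_f_def Let_def n_def[symmetric] by (simp add: prod_eq_iff)
qed

lemma reflect_line_eq:
  assumes ab: "(a, b) \<noteq> (0::real, 0)" and ab2: "(a2, b2) \<noteq> (0::real, 0)"
  defines "n \<equiv> a^2 + b^2"
  defines "t \<equiv> 2 * (a * a2 + b * b2) / n"
  shows "reflect_line (line_eq a b c) (line_eq a2 b2 c2) = line_eq (a2 - t * a) (b2 - t * b) (c2 - t * c)"
    and "(a2 - t * a, b2 - t * b) \<noteq> (0, 0)"
proof -
  have n0: "n \<noteq> 0" using ab_pos[OF ab] n_def by linarith
  let ?R = "refl_f a b c"
  have key: "?R x \<in> line_eq a2 b2 c2 \<longleftrightarrow> x \<in> line_eq (a2 - t * a) (b2 - t * b) (c2 - t * c)" for x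
  proof -
    define k where "k = 2 * (a * fst x + b * snd x - c) / n"
    have r: "?R x = (fst x - k * a, snd x - k * b)" unfolding refl_f_def k_def n_def Let_def by simp
    have "k * (a * a2 + b * b2) = (2 * (a * fst x + b * snd x - c) * (a * a2 + b * b2)) / n" unfolding k_def by simp
    also have "\<dots> = (2 * (a * a2 + b * b2) * (a * fst x + b * snd x - c)) / n" by (simp only: ac_simps)
    also have "\<dots> = t * (a * fst x + b * snd x - c)" unfolding t_def by simp
    finally have "a2 * (fst x - k * a) + b2 * (snd x - k * b) =
         (a2 - t * a) * fst x + (b2 - t * b) * snd x + t * c"
      by (simp add: algebra_simps)
    then show ?thesis unfolding line_eq_mem r by auto
  qed
  show "reflect_line (line_eq a b c) (line_eq a2 b2 c2) = line_eq (a2 - t * a) (b2 - t * b) (c2 - t * c)"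
    unfolding reflect_line_def reflect_pt_eq[OF ab]
  proof
    show "?R ` line_eq a2 b2 c2 \<subseteq> line_eq (a2 - t * a) (b2 - t * b) (c2 - t * c)"
      using key refl_f_invol[OF ab] by (intro image_subsetI) metis
    show "line_eq (a2 - t * a) (b2 - t * b) (c2 - t * c) \<subseteq> ?R ` line_eq a2 b2 c2"
    proof
      fix x assume "x \<in> line_eq (a2 - t * a) (b2 - t * b) (c2 - t * c)"
      then have "?R x \<in> line_eq a2 b2 c2" using key by blast
      then show "x \<in> ?R ` line_eq a2 b2 c2" using refl_f_invol[OF ab, of c x] image_eqI[of x ?R "?R x"] by simp
    qed
  qed
  have "t * n = 2 * (a * a2 + b * b2)" unfolding t_def using n0 by simp
  then have tn: "t * n = 2 * (a * a2 + b * b2)" .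
  have "(a2 - t * a)^2 + (b2 - t * b)^2 = a2^2 + b2^2 - 2 * t * (a * a2 + b * b2) + t * (t * n)"
    unfolding n_def by (simp add: algebra_simps power2_eq_square)
  also have "\<dots> = a2^2 + b2^2" unfolding tn by simp
  finally have "(a2 - t * a)^2 + (b2 - t * b)^2 = a2^2 + b2^2" .
  then show "(a2 - t * a, b2 - t * b) \<noteq> (0, 0)" using ab_pos[OF ab2] by auto
qed



definition pyf :: "real set \<Rightarrow> bool" where
  "pyf K \<longleftrightarrow> 0 \<in> K \<and> 1 \<in> K \<and> (\<forall>a\<in>K. \<forall>b\<in>K. a + b \<in> K \<and> a * b \<in> K \<and> -a \<in> K \<and> inverse a \<in> K
   \<and> sqrt (a^2 + b^2) \<in> K)"

definition Lk :: "real set \<Rightarrow> point set set" where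
  "Lk K = {line_eq a b c | a b c. a \<in> K \<and> b \<in> K \<and> c \<in> K \<and> (a, b) \<noteq> (0, 0)}"

context fixes K assumes K: "pyf K"
begin
lemma K0: "0 \<in> K" and K1: "1 \<in> K" using K unfolding pyf_def by auto
lemma Kadd: "a \<in> K \<Longrightarrow> b \<in> K \<Longrightarrow> a + b \<in> K" using K unfolding pyf_def by auto
lemma Kmult: "a \<in> K \<Longrightarrow> b \<in> K \<Longrightarrow> a * b \<in> K" using K unfolding pyf_def by auto
lemma Kminus: "a \<in> K \<Longrightarrow> - a \<in> K" using K unfolding pyf_def by auto
lemma Kinv: "a \<in> K \<Longrightarrow> inverse a \<in> K" using K unfolding pyf_def by auto
lemma Ksqrt: "a \<in> K \<Longrightarrow> b \<in> K \<Longrightarrow> sqrt (a^2 + b^2) \<in> K" using K unfolding pyf_def by auto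
lemma Kdiff: assumes "a \<in> K" "b \<in> K" shows "a - b \<in> K"
proof -
  have "a + - b \<in> K" using Kadd[OF assms(1) Kminus[OF assms(2)]] .
  then show ?thesis by simp
qed
lemma Kdiv: assumes "a \<in> K" "b \<in> K" shows "a / b \<in> K"
proof -
  have "a * inverse b \<in> K" using Kmult[OF assms(1) Kinv[OF assms(2)]] .
  then show ?thesis by (simp add: divide_inverse)
qed
lemma K2: "2 \<in> K" using Kadd[OF K1 K1] by simp
lemma Kpow2: "a \<in> K \<Longrightarrow> a^2 \<in> K" using Kmult by (simp add: power2_eq_square)
lemmas KI = K0 K1 K2 Kadd Kmult Kminus Kinv Ksqrt Kdiff Kdiv Kpow2

lemma Lk_mem: "a \<in> K \<Longrightarrow> b \<in> K \<Longrightarrow> c \<in> K \<Longrightarrow> (a, b) \<noteq> (0, 0) \<Longrightarrow> line_eq a b c \<in> Lk K"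
  unfolding Lk_def by blast

lemma aff_mid: "(\<alpha>::real) * ((x1 + y1) / 2) + \<beta> * ((x2 + y2) / 2) - \<gamma> = ((\<alpha> * x1 + \<beta> * x2 - \<gamma>) + (\<alpha> * y1 + \<beta> * y2 - \<gamma>)) / 2"
  by (simp add: field_simps)

lemma zero_case:
  assumes n1: "n1 > 0" and n2: "n2 > 0" and s: "s * s = (1::real)"
    and e: "a1 / n1 - s * (a2 / n2) = 0" "b1 / n1 - s * (b2 / n2) = 0" "c1 / n1 - s * (c2 / n2) = 0"
  shows "line_eq a2 b2 c2 = line_eq a1 b1 c1"
proof -
  define l where "l = s * n2 / n1"
  have s0: "s \<noteq> 0" using s by (metis mult_zero_left zero_neq_one)
  have l0: "l \<noteq> 0" unfolding l_def using n1 n2 s0 by simp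
  have g: "x2 = l * x1" if "x1 / n1 - s * (x2 / n2) = 0" for x1 x2
  proof -
    have "x1 / n1 = s * (x2 / n2)" using that by simp
    then have "s * (x1 / n1) = s * (s * (x2 / n2))" by (rule arg_cong)
    then have "s * (x1 / n1) = x2 / n2" by (simp only: mult.assoc[symmetric] s mult_1)
    then have "n2 * (s * (x1 / n1)) = x2" using n2 by simp
    moreover have "l * x1 = n2 * (s * (x1 / n1))" unfolding l_def by simp
    ultimately show ?thesis by simp
  qed
  show ?thesis using g[OF e(1)] g[OF e(2)] g[OF e(3)] line_eq_scale[OF l0] by simp
qed

lemma ok_lines: assumes "L \<in> Lk K" shows "is_line L" using assms unfolding Lk_def is_line_def by blast

lemma ok_inter:
  assumes L1: "L1 \<in> Lk K" and L2: "L2 \<in> Lk K" and s: "L1 \<inter> L2 = {p}"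
  shows "p \<in> K \<times> K"
proof -
  obtain a b c where 1: "L1 = line_eq a b c" "a \<in> K" "b \<in> K" "c \<in> K" "(a, b) \<noteq> (0, 0)" using L1 unfolding Lk_def by blast
  obtain a' b' c' where 2: "L2 = line_eq a' b' c'" "a' \<in> K" "b' \<in> K" "c' \<in> K" using L2 unfolding Lk_def by blast
  have d: "a * b' - a' * b \<noteq> 0" using single_det[OF 1(5)] s 1(1) 2(1) by simp
  have "p \<in> line_eq a b c \<inter> line_eq a' b' c'" using s 1(1) 2(1) by simp
  then have p: "a * fst p + b * snd p = c" "a' * fst p + b' * snd p = c'" by (auto simp: line_eq_mem)
  have "fst p = (c * b' - c' * b) / (a * b' - a' * b)" using cramer(1)[OF p] d by (simp add: eq_divide_eq mult.commute)
  moreover have "snd p = (a * c' - a' * c) / (a * b' - a' * b)" using cramer(2)[OF p] d by (simp add: eq_divide_eq mult.commute)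
  moreover have "(c * b' - c' * b) / (a * b' - a' * b) \<in> K" using 1 2 by (intro KI) assumption+
  moreover have "(a * c' - a' * c) / (a * b' - a' * b) \<in> K" using 1 2 by (intro KI) assumption+
  ultimately have "fst p \<in> K" "snd p \<in> K" by simp_all
  then show "p \<in> K \<times> K" by (simp add: mem_Times_iff)
qed

lemma ok_through:
  assumes p: "p \<in> K \<times> K" and q: "q \<in> K \<times> K" and pq: "p \<noteq> q"
  shows "line_through p q \<in> Lk K"
proof -
  have ne: "(snd q - snd p, fst p - fst q) \<noteq> (0, 0)" using pq by (auto simp: prod_eq_iff)
  show "line_through p q \<in> Lk K" unfolding line_through_eq[OF pq]
    using p q ne by (intro Lk_mem KI) (auto simp: mem_Times_iff)
qed

lemma ok_perp:
  assumes p: "p \<in> K \<times> K" and q: "q \<in> K \<times> K" and pq: "p \<noteq> q"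
  shows "perp_bisector p q \<in> Lk K"
proof -
  have ne: "(2 * (fst q - fst p), 2 * (snd q - snd p)) \<noteq> (0, 0)" using pq by (auto simp: prod_eq_iff)
  show "perp_bisector p q \<in> Lk K" unfolding perp_bisector_eq
    using p q ne by (intro Lk_mem KI) (auto simp: mem_Times_iff)
qed

lemma ok_refl:
  assumes L1: "L1 \<in> Lk K" and L2: "L2 \<in> Lk K"
  shows "reflect_line L1 L2 \<in> Lk K"
proof -
  obtain a b c where 1: "L1 = line_eq a b c" "a \<in> K" "b \<in> K" "c \<in> K" "(a, b) \<noteq> (0, 0)" using L1 unfolding Lk_def by blast
  obtain a2 b2 c2 where 2: "L2 = line_eq a2 b2 c2" "a2 \<in> K" "b2 \<in> K" "c2 \<in> K" "(a2, b2) \<noteq> (0, 0)" using L2 unfolding Lk_def by blast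
  show "reflect_line L1 L2 \<in> Lk K" unfolding 1(1) 2(1) reflect_line_eq[OF 1(5) 2(5)]
    using 1 2 reflect_line_eq(2)[OF 1(5) 2(5)] by (intro Lk_mem KI) simp_all
qed

lemma ok_equi:
  assumes L1: "L1 \<in> Lk K" and L2: "L2 \<in> Lk K" and ne: "L1 \<noteq> L2" and eqd: "equidistant_line L L1 L2"
  shows "L \<in> Lk K"
proof -
  obtain a1 b1 c1 where 1: "L1 = line_eq a1 b1 c1" "a1 \<in> K" "b1 \<in> K" "c1 \<in> K" "(a1, b1) \<noteq> (0, 0)" using L1 unfolding Lk_def by blast
  obtain a2 b2 c2 where 2: "L2 = line_eq a2 b2 c2" "a2 \<in> K" "b2 \<in> K" "c2 \<in> K" "(a2, b2) \<noteq> (0, 0)" using L2 unfolding Lk_def by blast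
  obtain a b c where L: "L = line_eq a b c" "(a, b) \<noteq> (0, 0)" using eqd unfolding equidistant_line_def is_line_def by blast
  define n1 where "n1 = sqrt (a1^2 + b1^2)"
  define n2 where "n2 = sqrt (a2^2 + b2^2)"
  have n1: "n1 > 0" unfolding n1_def using ab_pos[OF 1(5)] by simp
  have n2: "n2 > 0" unfolding n2_def using ab_pos[OF 2(5)] by simp
  have n1K: "n1 \<in> K" unfolding n1_def using 1 by (intro KI)
  have n2K: "n2 \<in> K" unfolding n2_def using 2 by (intro KI)
  define F where "F = (\<lambda>s::real. \<lambda>x::point. (a1 / n1 - s * (a2 / n2)) * fst x + (b1 / n1 - s * (b2 / n2)) * snd x - (c1 / n1 - s * (c2 / n2)))"
  have FF: "F s x = (a1 * fst x + b1 * snd x - c1) / n1 - s * ((a2 * fst x + b2 * snd x - c2) / n2)" for s x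
    unfolding F_def by (simp add: algebra_simps add_divide_distrib diff_divide_distrib)
  have FG: "F 1 x = 0 \<or> F (-1) x = 0" if "x \<in> L" for x
  proof -
    have "infdist x L1 = infdist x L2" using eqd that unfolding equidistant_line_def by blast
    then have hE: "\<bar>a1 * fst x + b1 * snd x - c1\<bar> / n1 = \<bar>a2 * fst x + b2 * snd x - c2\<bar> / n2"
      unfolding 1(1) 2(1) infdist_line[OF 1(5)] infdist_line[OF 2(5)] n1_def n2_def .
    define U where "U = (a1 * fst x + b1 * snd x - c1) / n1"
    define V where "V = (a2 * fst x + b2 * snd x - c2) / n2"
    have "\<bar>U\<bar> = \<bar>V\<bar>" unfolding U_def V_def using n1 n2 hE by (simp add: abs_div)
    then have UV: "U = V \<or> U = - V" by (simp only: abs_eq_iff)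
    have f1: "F 1 x = U - 1 * V" unfolding U_def V_def by (rule FF)
    have f2: "F (-1) x = U - (-1) * V" unfolding U_def V_def by (rule FF)
    show ?thesis using UV unfolding f1 f2 by auto
  qed
  have mid: "((fst u + fst v) / 2, (snd u + snd v) / 2) \<in> L" if "u \<in> L" "v \<in> L" for u v
    using that unfolding L(1) line_eq_mem using aff_mid[of a "fst u" "fst v" b "snd u" "snd v" c] by simp
  have Fmid: "F s ((fst u + fst v) / 2, (snd u + snd v) / 2) = (F s u + F s v) / 2" for s u v
    unfolding F_def fst_conv snd_conv by (rule aff_mid)
  have sub: "\<exists>s. s * s = 1 \<and> (\<forall>x\<in>L. F s x = 0)"
  proof (rule ccontr)
    assume "\<not> ?thesis"
    then have nt: "\<And>s. s * s = 1 \<Longrightarrow> \<not> (\<forall>x\<in>L. F s x = 0)" by blast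
    obtain u where u: "u \<in> L" "F 1 u \<noteq> 0" using nt[of 1] by auto
    obtain v where v: "v \<in> L" "F (-1) v \<noteq> 0" using nt[of "-1"] by auto
    have "F (-1) u = 0" using FG[OF u(1)] u(2) by simp
    have "F 1 v = 0" using FG[OF v(1)] v(2) by simp
    have "F 1 ((fst u + fst v) / 2, (snd u + snd v) / 2) \<noteq> 0" using Fmid[of 1 u v] u(2) \<open>F 1 v = 0\<close> by simp
    moreover have "F (-1) ((fst u + fst v) / 2, (snd u + snd v) / 2) \<noteq> 0" using Fmid[of "-1" u v] v(2) \<open>F (-1) u = 0\<close> by simp
    ultimately show False using FG[OF mid[OF u(1) v(1)]] by simp
  qed
  then obtain s where s: "s * s = 1" "\<forall>x\<in>L. F s x = 0" by blast
  have sK: "s \<in> K"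
  proof -
    have "s = 1 \<or> s = -1" using s(1) by (simp only: square_eq_1_iff)
    then show ?thesis using K1 Kminus[OF K1] by auto
  qed
  define \<alpha> where "\<alpha> = a1 / n1 - s * (a2 / n2)"
  define \<beta> where "\<beta> = b1 / n1 - s * (b2 / n2)"
  define \<gamma> where "\<gamma> = c1 / n1 - s * (c2 / n2)"
  have Lsub: "L \<subseteq> line_eq \<alpha> \<beta> \<gamma>" using s(2) unfolding line_eq_mem F_def \<alpha>_def \<beta>_def \<gamma>_def by (auto simp: line_eq_mem)
  have abn: "(\<alpha>, \<beta>) \<noteq> (0, 0)"
  proof
    assume z: "(\<alpha>, \<beta>) = (0, 0)"
    have "(c * a / (a^2 + b^2), c * b / (a^2 + b^2)) \<in> L" using line_eq_pt[OF L(2)] L(1) by simp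
    then have "(c * a / (a^2 + b^2), c * b / (a^2 + b^2)) \<in> line_eq \<alpha> \<beta> \<gamma>" using Lsub by blast
    then have "\<gamma> = 0" using z unfolding line_eq_mem by simp
    then have "line_eq a2 b2 c2 = line_eq a1 b1 c1" using zero_case[OF n1 n2 s(1)] z \<alpha>_def \<beta>_def \<gamma>_def by simp
    then show False using ne 1(1) 2(1) by simp
  qed
  have "line_eq \<alpha> \<beta> \<gamma> = line_eq a b c" using line_eq_sub_eq[OF L(2) abn] Lsub L(1) by blast
  then have "L = line_eq \<alpha> \<beta> \<gamma>" using L(1) by simp
  moreover have "\<alpha> \<in> K" unfolding \<alpha>_def using 1 2 n1K n2K sK by (intro KI) assumption+
  moreover have "\<beta> \<in> K" unfolding \<beta>_def using 1 2 n1K n2K sK by (intro KI) assumption+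
  moreover have "\<gamma> \<in> K" unfolding \<gamma>_def using 1 2 n1K n2K sK by (intro KI) assumption+
  ultimately show "L \<in> Lk K" using Lk_mem abn by simp
qed

lemma origami_K: "origami_pair (K \<times> K) (Lk K)"
  unfolding origami_pair_def
proof (intro conjI ballI allI impI)
  show "is_line L" if "L \<in> Lk K" for L using ok_lines[OF that] .
  show "p \<in> K \<times> K" if "L1 \<in> Lk K" "L2 \<in> Lk K" "L1 \<inter> L2 = {p}" for L1 L2 p using ok_inter[OF that] .
  show "line_through p q \<in> Lk K" if "p \<in> K \<times> K" "q \<in> K \<times> K" "p \<noteq> q" for p q using ok_through[OF that] .
  show "perp_bisector p q \<in> Lk K" if "p \<in> K \<times> K" "q \<in> K \<times> K" "p \<noteq> q" for p q using ok_perp[OF that] .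
  show "L \<in> Lk K" if "L1 \<in> Lk K" "L2 \<in> Lk K" "L1 \<noteq> L2" "equidistant_line L L1 L2" for L1 L2 L using ok_equi[OF that] .
  show "reflect_line L1 L2 \<in> Lk K" if "L1 \<in> Lk K" "L2 \<in> Lk K" for L1 L2 using ok_refl[OF that] .
qed
end


lemma is_line_eq: "(a, b) \<noteq> (0, 0) \<Longrightarrow> is_line (line_eq a b c)"
  unfolding is_line_def by blast

lemma construct:
  assumes op: "origami_pair P \<L>" and O: "(0, 0) \<in> P" and I: "(0, 1) \<in> P"
  shows "(sqrt 2 / 2, 1 + sqrt 2 / 2) \<in> P"
proof -
  note opd = op[unfolded origami_pair_def]
  have thr: "\<And>p q. p \<in> P \<Longrightarrow> q \<in> P \<Longrightarrow> p \<noteq> q \<Longrightarrow> line_through p q \<in> \<L>"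
    using conjunct1[OF conjunct2[OF conjunct2[OF opd]]] by blast
  have pb: "\<And>p q. p \<in> P \<Longrightarrow> q \<in> P \<Longrightarrow> p \<noteq> q \<Longrightarrow> perp_bisector p q \<in> \<L>"
    using conjunct1[OF conjunct2[OF conjunct2[OF conjunct2[OF opd]]]] by blast
  have int: "\<And>L1 L2 p. L1 \<in> \<L> \<Longrightarrow> L2 \<in> \<L> \<Longrightarrow> L1 \<inter> L2 = {p} \<Longrightarrow> p \<in> P"
    using conjunct1[OF conjunct2[OF opd]] by blast
  have eqd: "\<And>L1 L2 M. L1 \<in> \<L> \<Longrightarrow> L2 \<in> \<L> \<Longrightarrow> L1 \<noteq> L2 \<Longrightarrow> equidistant_line M L1 L2 \<Longrightarrow> M \<in> \<L>"
    using conjunct1[OF conjunct2[OF conjunct2[OF conjunct2[OF conjunct2[OF opd]]]]] by blast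
  have V: "line_eq 1 0 0 \<in> \<L>"
  proof -
    have "line_through (0, 0) (0, 1) = line_eq 1 0 0" by (simp add: line_through_eq)
    then show ?thesis using thr[OF O I] by simp
  qed
  have H: "line_eq 0 2 1 \<in> \<L>"
  proof -
    have "perp_bisector (0, 0) (0, 1) = line_eq 0 2 1" by (simp add: perp_bisector_eq)
    then show ?thesis using pb[OF O I] by simp
  qed
  have "line_eq 1 0 0 \<inter> line_eq 0 2 1 = {(0::real, 1/2::real)}" by (rule inter_single) (simp_all add: line_eq_mem)
  then have C: "(0, 1/2) \<in> P" using int[OF V H] by blast
  have VH: "line_eq 1 0 0 \<noteq> line_eq 0 2 1"
  proof
    assume "line_eq 1 0 0 = line_eq 0 2 1"
    moreover have "(0, 0) \<in> line_eq 1 0 (0::real)" by (simp add: line_eq_mem)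
    ultimately show False by (simp add: line_eq_mem)
  qed
  have D: "line_eq 1 1 (1/2) \<in> \<L>"
  proof (rule eqd[OF V H VH])
    show "equidistant_line (line_eq 1 1 (1/2)) (line_eq 1 0 0) (line_eq 0 2 1)"
      unfolding equidistant_line_def
    proof (intro conjI ballI)
      show "is_line (line_eq 1 1 (1/2))" by (rule is_line_eq) simp
      fix x assume x: "x \<in> line_eq 1 1 (1/2)"
      then have "snd x = 1/2 - fst x" by (simp add: line_eq_mem)
      then show "infdist x (line_eq 1 0 0) = infdist x (line_eq 0 2 1)"
        by (simp add: infdist_line abs_minus_commute)
    qed
  qed
  have H1: "line_eq 0 1 (1/4) \<in> \<L>"
  proof -
    have "perp_bisector (0, 0) (0, 1/2) = line_eq 0 1 (1/4)" by (simp add: perp_bisector_eq power2_eq_square)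
    then show ?thesis using pb[OF O C] by simp
  qed
  have H3: "line_eq 0 1 (3/4) \<in> \<L>"
  proof -
    have "perp_bisector (0, 1/2) (0, 1) = line_eq 0 1 (3/4)" by (simp add: perp_bisector_eq power2_eq_square)
    then show ?thesis using pb[OF C I] by simp
  qed
  have "line_eq 1 1 (1/2) \<inter> line_eq 0 1 (1/4) = {(1/4::real, 1/4::real)}" by (rule inter_single) (simp_all add: line_eq_mem)
  then have Q1: "(1/4, 1/4) \<in> P" using int[OF D H1] by blast
  have "line_eq 1 1 (1/2) \<inter> line_eq 0 1 (3/4) = {(-1/4::real, 3/4::real)}" by (rule inter_single) (simp_all add: line_eq_mem)
  then have Q2: "(-1/4, 3/4) \<in> P" using int[OF D H3] by blast
  have G: "line_eq 1 (-1) 0 \<in> \<L>"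
  proof -
    have "line_through (0, 0) (1/4, 1/4) = line_eq (1/4) (-(1/4)) 0" by (simp add: line_through_eq)
    also have "\<dots> = line_eq 1 (-1) 0" using line_eq_scale[of "1/4" 1 "-1" 0] by simp
    finally show ?thesis using thr[OF O Q1] by simp
  qed
  have G': "line_eq (-1) 1 1 \<in> \<L>"
  proof -
    have "line_through (0, 1) (-1/4, 3/4) = line_eq (-(1/4)) (1/4) (1/4)" by (simp add: line_through_eq)
    also have "\<dots> = line_eq (-1) 1 1" using line_eq_scale[of "1/4" "-1" 1 1] by simp
    finally show ?thesis using thr[OF I Q2] by simp
  qed
  have VG: "line_eq 1 0 0 \<noteq> line_eq 1 (-1) 0"
  proof
    assume "line_eq 1 0 0 = line_eq 1 (-1) 0"
    moreover have "(0, 1) \<in> line_eq 1 0 (0::real)" by (simp add: line_eq_mem)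
    ultimately show False by (simp add: line_eq_mem)
  qed
  have B: "line_eq (1 + sqrt 2) (-1) 0 \<in> \<L>"
  proof (rule eqd[OF V G VG])
    show "equidistant_line (line_eq (1 + sqrt 2) (-1) 0) (line_eq 1 0 0) (line_eq 1 (-1) 0)"
      unfolding equidistant_line_def
    proof (intro conjI ballI)
      show "is_line (line_eq (1 + sqrt 2) (-1) 0)" by (rule is_line_eq) simp
      fix x assume x: "x \<in> line_eq (1 + sqrt 2) (-1) 0"
      then have sx: "snd x = (1 + sqrt 2) * fst x" by (simp add: line_eq_mem)
      have "infdist x (line_eq 1 (-1) 0) = \<bar>fst x - snd x\<bar> / sqrt 2" by (simp add: infdist_line)
      also have "fst x - snd x = - (sqrt 2 * fst x)" unfolding sx by (simp add: algebra_simps)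
      also have "\<bar>- (sqrt 2 * fst x)\<bar> / sqrt 2 = \<bar>fst x\<bar>" by (simp add: abs_mult)
      finally show "infdist x (line_eq 1 0 0) = infdist x (line_eq 1 (-1) 0)"
        by (simp add: infdist_line)
    qed
  qed
  have "line_eq (1 + sqrt 2) (-1) 0 \<inter> line_eq (-1) 1 1 = {(sqrt 2 / 2, 1 + sqrt 2 / 2)}"
  proof (rule inter_single)
    show "(1 + sqrt 2) * 1 - (-1) * (-1) \<noteq> (0::real)" by simp
    have "(1 + sqrt 2) * (sqrt 2 / 2) = (sqrt 2 + sqrt 2 * sqrt 2) / 2" by (simp add: algebra_simps)
    also have "\<dots> = (sqrt 2 + 2) / 2" by simp
    finally have e: "(1 + sqrt 2) * (sqrt 2 / 2) = (sqrt 2 + 2) / 2" .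
    show "(sqrt 2 / 2, 1 + sqrt 2 / 2) \<in> line_eq (1 + sqrt 2) (-1) 0" unfolding line_eq_mem fst_conv snd_conv e by (simp add: add_divide_distrib)
    show "(sqrt 2 / 2, 1 + sqrt 2 / 2) \<in> line_eq (-1) 1 1" by (simp add: line_eq_mem)
  qed
  then show ?thesis using int[OF B G'] by blast
qed

lemma sqrt_in_F0: "sqrt (2 + sqrt 2) \<in> F0"
proof -
  have Z: "(sqrt 2 / 2, 1 + sqrt 2 / 2) \<in> P0" unfolding P0_def origami_closed_def using construct by blast
  have O: "(0, 0) \<in> P0" unfolding P0_def by blast
  have "(sqrt 2 / 2)^2 + (1 + sqrt 2 / 2)^2 = 2 + sqrt 2"
    by (simp add: power2_eq_square algebra_simps)
  then have "dist (sqrt 2 / 2, 1 + sqrt 2 / 2) (0, 0) = sqrt (2 + sqrt 2)"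
    by (simp add: dist_pt)
  then have "dist (0, 0) (sqrt 2 / 2, 1 + sqrt 2 / 2) = sqrt (2 + sqrt 2)"
    by (simp add: dist_commute)
  then show ?thesis unfolding F0_def using O Z by (intro CollectI bexI[of _ "(0,0)"] bexI[of _ "(sqrt 2 / 2, 1 + sqrt 2 / 2)"]) auto
qed

lemma one_in_F0: "(1::real) \<in> F0"
proof -
  have "(0, 0) \<in> P0" "(0, 1) \<in> P0" unfolding P0_def by blast+
  moreover have "dist (0::real, 0::real) (0, 1) = 1" by (simp add: dist_pt)
  ultimately show ?thesis unfolding F0_def by force
qed


theorem mainTheorem9:
  shows "sqrt (2 + sqrt 2) \<in> F0 \<and> (1::real) \<in> F0 \<and>
         sqrt ((sqrt (2 + sqrt 2))\<^sup>2 - 1\<^sup>2) = sqrt (1 + sqrt 2) \<and>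
         sqrt (1 + sqrt 2) \<notin> F0 \<and>
         \<not> (\<forall>h a. h \<in> F0 \<longrightarrow> a \<in> F0 \<longrightarrow> h > a \<longrightarrow> a > 0 \<longrightarrow> sqrt (h\<^sup>2 - a\<^sup>2) \<in> F0)"
proof -
  have eq3: "sqrt ((sqrt (2 + sqrt 2))\<^sup>2 - 1\<^sup>2) = sqrt (1 + sqrt 2)"
  proof -
    have "(sqrt (2 + sqrt 2))\<^sup>2 = 2 + sqrt 2" by (simp add: add_nonneg_nonneg)
    then show ?thesis by simp
  qed
  have notin: "sqrt (1 + sqrt 2) \<notin> F0"
  proof
    assume F: "sqrt (1 + sqrt 2) \<in> F0"
    obtain K where Kp: "(\<forall>a\<in>K. \<forall>b\<in>K. a + b \<in> K \<and> a * b \<in> K \<and> -a \<in> K \<and> inverse a \<in> K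
      \<and> sqrt (a^2 + b^2) \<in> K)" "0 \<in> K" "1 \<in> K" "sqrt (1 + sqrt 2) \<notin> K"
      using exists_K by blast
    have pK: "pyf K" unfolding pyf_def using Kp(1,2,3) by blast
    have cl: "origami_closed (K \<times> K)" unfolding origami_closed_def using origami_K[OF pK] by blast
    have "(0, 0) \<in> K \<times> K" "(0, 1) \<in> K \<times> K" using Kp(2,3) by auto
    then have "K \<times> K \<in> {P. (0, 0) \<in> P \<and> (0, 1) \<in> P \<and> origami_closed P}" using cl by simp
    then have sub: "P0 \<subseteq> K \<times> K" unfolding P0_def by (rule Inter_lower)
    obtain v1 v2 where v: "v1 \<in> P0" "v2 \<in> P0" "\<bar>sqrt (1 + sqrt 2)\<bar> = dist v1 v2"
      using F unfolding F0_def by auto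
    have vK: "fst v1 \<in> K" "snd v1 \<in> K" "fst v2 \<in> K" "snd v2 \<in> K" using v(1,2) sub by (auto simp: mem_Times_iff)
    have "dist v1 v2 \<in> K" unfolding dist_pt using vK by (intro Ksqrt[OF pK] Kdiff[OF pK])
    moreover have "\<bar>sqrt (1 + sqrt 2)\<bar> = sqrt (1 + sqrt 2)" by (simp add: add_nonneg_nonneg)
    ultimately show False using v(3) Kp(4) by simp
  qed
  have last: "\<not> (\<forall>h a. h \<in> F0 \<longrightarrow> a \<in> F0 \<longrightarrow> h > a \<longrightarrow> a > 0 \<longrightarrow> sqrt (h\<^sup>2 - a\<^sup>2) \<in> F0)"
  proof
    assume A: "\<forall>h a. h \<in> F0 \<longrightarrow> a \<in> F0 \<longrightarrow> h > a \<longrightarrow> a > 0 \<longrightarrow> sqrt (h\<^sup>2 - a\<^sup>2) \<in> F0"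
    have s0: "0 \<le> sqrt (2::real)" by simp
    have "1 < 2 + sqrt (2::real)" using s0 by linarith
    then have gt: "sqrt (2 + sqrt 2) > 1" by simp
    have "sqrt ((sqrt (2 + sqrt 2))\<^sup>2 - 1\<^sup>2) \<in> F0" using A[rule_format, OF sqrt_in_F0 one_in_F0 gt] s0 by simp
    then show False using eq3 notin by simp
  qed
  show ?thesis using sqrt_in_F0 one_in_F0 eq3 notin last by (intro conjI)
qed


end
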